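(* For any finite set $P\subset\mathbb{R}^1$ containing the source $s$, any integer $k\ge 1$ and any $\alpha>1$, the canonical range assignment satisfies $$\mathrm{cost}_\alpha(\rho_k(P))\le\Big(1+\frac{2^\alpha}{k^{\alpha-1}}\Big)\cdot\mathrm{cost}_\alpha(\rho_{\mathrm{opt}}(P)).$$
   Context: Setting: points in $\mathbb{R}^1$; a range assignment $\rho$ on a finite set $P$ containing source $s$ induces the directed graph with edge $(p,q)$ iff $|pq|\le\rho(p)$; feasible if this graph contains an arborescence rooted at $s$ spanning $P$; $\mathrm{cost}_\alpha(\rho(P))=\sum_{p\in P}\rho(p)^\alpha$. Write $P=L\cup\{s\}\cup R$, $L=\{\ell_1,\dots,\ell_{|L|}\}$ left of $s$ and $R=\{r_1,\dots,r_{|R|}\}$ right of $s$, numbered by increasing distance from $s$; $\ell_{|L|},r_{|R|}$ are extreme. Successor: $r_i\mapsto r_{i+1}$, $\ell_i\mapsto\ell_{i+1}$, $s$ has successors $r_1,\ell_1$, extreme points have none. A chain is a path using only edges from a point to its successor. The standard range $\rho_{\mathrm{st}}(p)$ of a non-extreme $p\ne s$ is its distance to its successor, $0$ for extreme points; $s$ has standard ranges $|s\ell_1|,|sr_1|$. A zero-range point is a non-extreme point with range $0$. In a broadcast tree $\mathcal{B}$ (arborescence rooted at $s$) a point of $R\cup L$ is root-crossing if it has a child on the other side of $s$; $s$ is root-crossing if it has children in both $L$ and $R$. $\rho_{\mathrm{opt}}(P)$: if all of $P\setminus\{s\}$ lies on one side of $s$, every point gets its standard range; otherwise $\rho_{\mathrm{opt}}$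 is a minimum-cost feasible assignment whose graph contains a broadcast tree with a single root-crossing point $p^*$, a chain from $s$ to $p^*$, all points within reach of $p^*$ except those on that chain being children of $p^*$, and chains from the rightmost (resp. leftmost) point within reach of $p^*$ to $r_{|R|}$ (resp. $\ell_{|L|}$). Canonical assignment $\rho_k$: if all points lie on one side of $s$, $\rho_k=\rho_{\mathrm{opt}}$; otherwise, with $Z$ the zero-range points of $\rho_{\mathrm{opt}}(P)$ and $Z_k=Z$ if $|Z|\le k$, else $Z_k$ the $k$ points of $Z$ with largest standard ranges (ties arbitrary), set $\rho_k=\rho_{\mathrm{opt}}$ on $P\setminus Z$, $\rho_k=0$ on $Z_k$, $\rho_k=\rho_{\mathrm{st}}$ on $Z\setminus Z_k$. *)

theory Defs
  imports Complex_Main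
begin

text \<open>Points of P are reals; s is the source. A range assignment is a function
  real => real (only its values on P matter).\<close>

definition has_right :: "real set \<Rightarrow> real \<Rightarrow> bool" where
  "has_right P x \<longleftrightarrow> (\<exists>y\<in>P. y > x)"

definition has_left :: "real set \<Rightarrow> real \<Rightarrow> bool" where
  "has_left P x \<longleftrightarrow> (\<exists>y\<in>P. y < x)"

definition right_nb :: "real set \<Rightarrow> real \<Rightarrow> real" where
  "right_nb P x = Min {y\<in>P. y > x}"

definition left_nb :: "real set \<Rightarrow> real \<Rightarrow> real" where
  "left_nb P x = Max {y\<in>P. y < x}"

definition has_succ :: "real set \<Rightarrow> real \<Rightarrow> real \<Rightarrow> bool" where
  "has_succ P s p \<longleftrightarrow> (if p > s then has_right P p else has_left P p)"

definition succ_pt :: "real set \<Rightarrow> real \<Rightarrow> real \<Rightarrow> real" where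
  "succ_pt P s p = (if p > s then right_nb P p else left_nb P p)"

definition pred_pt :: "real set \<Rightarrow> real \<Rightarrow> real \<Rightarrow> real" where
  "pred_pt P s q = (if q > s then left_nb P q else right_nb P q)"

definition extreme :: "real set \<Rightarrow> real \<Rightarrow> real \<Rightarrow> bool" where
  "extreme P s p \<longleftrightarrow> p \<noteq> s \<and> \<not> has_succ P s p"

text \<open>Standard range. For s (which has two standard ranges) we take the larger;
  this value is only used when all points lie on one side of s.\<close>
definition rho_st :: "real set \<Rightarrow> real \<Rightarrow> real \<Rightarrow> real" where
  "rho_st P s p =
     (if p = s then
        max (if has_right P s then right_nb P s - s else 0)
            (if has_left P s then s - left_nb P s else 0)
      else if has_succ P s p then \<bar>succ_pt P s p - p\<bar> else 0)"

definition cost :: "real \<Rightarrow> real set \<Rightarrow> (real \<Rightarrow> real) \<Rightarrow> real" where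
  "cost \<alpha> P \<rho> = (\<Sum>p\<in>P. \<rho> p powr \<alpha>)"

text \<open>Broadcast tree (arborescence rooted at s spanning P) in the graph induced by
  \<rho>, given by a parent function on P - {s}.\<close>
definition is_btree :: "real set \<Rightarrow> real \<Rightarrow> (real \<Rightarrow> real) \<Rightarrow> (real \<Rightarrow> real) \<Rightarrow> bool" where
  "is_btree P s \<rho> par \<longleftrightarrow>
     (\<forall>q\<in>P - {s}. par q \<in> P \<and> par q \<noteq> q \<and> \<bar>q - par q\<bar> \<le> \<rho> (par q)
                  \<and> (\<exists>n. (par ^^ n) q = s))"

definition feasible :: "real set \<Rightarrow> real \<Rightarrow> (real \<Rightarrow> real) \<Rightarrow> bool" where
  "feasible P s \<rho> \<longleftrightarrow> (\<exists>par. is_btree P s \<rho> par)"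

definition is_child :: "real set \<Rightarrow> real \<Rightarrow> (real \<Rightarrow> real) \<Rightarrow> real \<Rightarrow> real \<Rightarrow> bool" where
  "is_child P s par c p \<longleftrightarrow> c \<in> P - {s} \<and> par c = p"

definition root_crossing :: "real set \<Rightarrow> real \<Rightarrow> (real \<Rightarrow> real) \<Rightarrow> real \<Rightarrow> bool" where
  "root_crossing P s par p \<longleftrightarrow> p \<in> P \<and>
     (if p = s then (\<exists>c. is_child P s par c s \<and> c < s) \<and> (\<exists>c. is_child P s par c s \<and> c > s)
      else if p < s then (\<exists>c. is_child P s par c p \<and> c > s)
      else (\<exists>c. is_child P s par c p \<and> c < s))"

definition on_path :: "real \<Rightarrow> (real \<Rightarrow> real) \<Rightarrow> real \<Rightarrow> real \<Rightarrow> bool" where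
  "on_path s par p q \<longleftrightarrow> (\<exists>n. (par ^^ n) p = q \<and> (\<forall>m<n. (par ^^ m) p \<noteq> s))"

definition in_reach :: "real set \<Rightarrow> (real \<Rightarrow> real) \<Rightarrow> real \<Rightarrow> real set" where
  "in_reach P \<rho> p = {q\<in>P. \<bar>q - p\<bar> \<le> \<rho> p}"

definition one_sided :: "real set \<Rightarrow> real \<Rightarrow> bool" where
  "one_sided P s \<longleftrightarrow> (\<forall>p\<in>P. p \<ge> s) \<or> (\<forall>p\<in>P. p \<le> s)"

definition structured_tree :: "real set \<Rightarrow> real \<Rightarrow> (real \<Rightarrow> real) \<Rightarrow> (real \<Rightarrow> real) \<Rightarrow> real \<Rightarrow> bool" where
  "structured_tree P s \<rho> par pstar \<longleftrightarrow>
     is_btree P s \<rho> par \<and>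
     {p. root_crossing P s par p} = {pstar} \<and>
     (\<forall>q. on_path s par pstar q \<and> q \<noteq> s \<longrightarrow> par q = pred_pt P s q) \<and>
     (\<forall>q\<in>in_reach P \<rho> pstar. q \<noteq> pstar \<and> \<not> on_path s par pstar q \<longrightarrow> par q = pstar) \<and>
     (\<forall>q\<in>P. q > s \<and> q > Max (in_reach P \<rho> pstar) \<longrightarrow> par q = pred_pt P s q) \<and>
     (\<forall>q\<in>P. q < s \<and> q < Min (in_reach P \<rho> pstar) \<longrightarrow> par q = pred_pt P s q)"

definition is_rho_opt :: "real \<Rightarrow> real set \<Rightarrow> real \<Rightarrow> (real \<Rightarrow> real) \<Rightarrow> bool" where
  "is_rho_opt \<alpha> P s \<rho> \<longleftrightarrow>
     (if one_sided P s then (\<forall>p\<in>P. \<rho> p = rho_st P s p)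
      else (\<forall>p\<in>P. \<rho> p \<ge> 0) \<and> feasible P s \<rho> \<and>
           (\<forall>\<rho>'. (\<forall>p\<in>P. \<rho>' p \<ge> 0) \<and> feasible P s \<rho>' \<longrightarrow> cost \<alpha> P \<rho> \<le> cost \<alpha> P \<rho>') \<and>
           (\<exists>par pstar. structured_tree P s \<rho> par pstar))"

definition zero_range_pts :: "real set \<Rightarrow> real \<Rightarrow> (real \<Rightarrow> real) \<Rightarrow> real set" where
  "zero_range_pts P s \<rho> = {p\<in>P. \<not> extreme P s p \<and> \<rho> p = 0}"

definition is_Zk :: "nat \<Rightarrow> real set \<Rightarrow> real \<Rightarrow> (real \<Rightarrow> real) \<Rightarrow> real set \<Rightarrow> bool" where
  "is_Zk k P s \<rho> Zk \<longleftrightarrow>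
     (let Z = zero_range_pts P s \<rho> in
        Zk \<subseteq> Z \<and> card Zk = min k (card Z) \<and>
        (\<forall>z\<in>Zk. \<forall>z'\<in>Z - Zk. rho_st P s z' \<le> rho_st P s z))"

definition rho_k :: "real set \<Rightarrow> real \<Rightarrow> (real \<Rightarrow> real) \<Rightarrow> real set \<Rightarrow> real \<Rightarrow> real" where
  "rho_k P s \<rho>opt Zk p =
     (if one_sided P s then \<rho>opt p
      else if p \<in> Zk then 0
      else if p \<in> zero_range_pts P s \<rho>opt then rho_st P s p
      else \<rho>opt p)"

end

theory Submission
  imports Defs
begin

lemma intervals_sum:
  fixes a b :: "'i \<Rightarrow> real"
  assumes "finite I" "m \<le> M"
    and "\<forall>i\<in>I. m \<le> a i \<and> a i < b i \<and> b i \<le> M"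
    and "\<forall>i\<in>I. \<forall>j\<in>I. i \<noteq> j \<longrightarrow> b i \<le> a j \<or> b j \<le> a i"
  shows "(\<Sum>i\<in>I. b i - a i) \<le> M - m"
  using assms
proof (induction "card I" arbitrary: I M rule: less_induct)
  case less
  show ?case
  proof (cases "I = {}")
    case True then show ?thesis using less.prems by simp
  next
    case False
    have "Max (a ` I) \<in> a ` I" using False less.prems(1) by simp
    then obtain i0 where i0: "i0 \<in> I" "a i0 = Max (a ` I)" by auto
    have amax: "\<forall>j\<in>I. a j \<le> a i0" using i0 less.prems(1) by simp
    define I' where "I' = I - {i0}"
    have bj: "\<forall>j\<in>I'. b j \<le> a i0"
    proof
      fix j assume j: "j \<in> I'"
      then have "j \<in> I" "j \<noteq> i0" unfolding I'_def by auto
      then have "b j \<le> a i0 \<or> b i0 \<le> a j" using less.prems(4) i0(1) by blast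
      moreover have "a j \<le> a i0" "a i0 < b i0" using amax \<open>j \<in> I\<close> less.prems(3) i0(1) by auto
      ultimately show "b j \<le> a i0" by linarith
    qed
    have c: "card I' < card I" unfolding I'_def using i0(1) less.prems(1)
      by (meson card_Diff1_less)
    have "(\<Sum>i\<in>I'. b i - a i) \<le> a i0 - m"
      apply (rule less.hyps[OF c])
      using less.prems i0 bj unfolding I'_def by auto
    moreover have "(\<Sum>i\<in>I. b i - a i) = (b i0 - a i0) + (\<Sum>i\<in>I'. b i - a i)"
      unfolding I'_def using i0(1) less.prems(1) by (simp add: sum.remove)
    moreover have "b i0 \<le> M" using less.prems(3) i0(1) by auto
    ultimately show ?thesis by linarith
  qed
qed

lemma cross_down:
  fixes f :: "nat \<Rightarrow> real"
  assumes "f 0 \<ge> z" "f N < z"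
  shows "\<exists>n<N. f n \<ge> z \<and> f (Suc n) < z"
  using assms
proof (induction N)
  case 0 then show ?case by simp
next
  case (Suc N)
  show ?case
  proof (cases "f N < z")
    case True then show ?thesis using Suc by (meson less_SucI)
  next
    case False then show ?thesis using Suc.prems by auto
  qed
qed

lemma cross_up:
  fixes f :: "nat \<Rightarrow> real"
  assumes "f 0 \<le> z" "f N > z"
  shows "\<exists>n<N. f n \<le> z \<and> f (Suc n) > z"
  using cross_down[of "-z" "\<lambda>n. - f n" N] assms by auto

lemma reach_parent:
  assumes bt: "is_btree P s \<rho> par" and "q \<in> P - {s}" and "(par ^^ n) q = s"
  shows "\<exists>c\<in>P - {s}. par c = s"
  using assms(2,3)
proof (induction n arbitrary: q)
  case 0 then show ?case by simp
next
  case (Suc n)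
  show ?case
  proof (cases "par q = s")
    case True then show ?thesis using Suc.prems by blast
  next
    case False
    have "par q \<in> P" using bt Suc.prems(1) unfolding is_btree_def by blast
    moreover have "(par ^^ n) (par q) = s" using Suc.prems(2) by (metis comp_apply funpow_Suc_right)
    ultimately show ?thesis using Suc.IH False by blast
  qed
qed

lemma path_points:
  assumes bt: "is_btree P s \<rho> par" and pst: "pstar \<in> P" "pstar \<noteq> s"
  obtains N where "(par ^^ N) pstar = s" "\<forall>n<N. (par ^^ n) pstar \<noteq> s"
    "\<forall>n\<le>N. (par ^^ n) pstar \<in> P"
proof -
  obtain N0 where "(par ^^ N0) pstar = s" using bt pst unfolding is_btree_def by blast
  define N where "N = (LEAST n. (par ^^ n) pstar = s)"
  have N1: "(par ^^ N) pstar = s" unfolding N_def by (rule LeastI, fact)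
  have N2: "\<forall>n<N. (par ^^ n) pstar \<noteq> s" unfolding N_def using not_less_Least by blast
  have "\<forall>n\<le>N. (par ^^ n) pstar \<in> P"
  proof (intro allI impI)
    fix n assume "n \<le> N"
    then show "(par ^^ n) pstar \<in> P"
    proof (induction n)
      case 0 then show ?case using pst by simp
    next
      case (Suc n)
      then have "(par ^^ n) pstar \<in> P - {s}" using N2 by auto
      then show ?case using bt unfolding is_btree_def by simp
    qed
  qed
  then show ?thesis using that N1 N2 by blast
qed


lemma descent_right:
  assumes bt: "is_btree P s \<rho> par"
    and path: "\<forall>q. on_path s par pstar q \<and> q \<noteq> s \<longrightarrow> par q = pred_pt P s q"
    and fin: "finite P" and pst: "pstar \<in> P" and z: "z \<in> P" "s < z" "z \<le> pstar"
  shows "z = pstar \<or> (\<exists>c\<in>P - {s}. par c = z)"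
proof -
  have "pstar \<noteq> s" using z by auto
  then obtain N where N: "(par ^^ N) pstar = s" "\<forall>n<N. (par ^^ n) pstar \<noteq> s"
    "\<forall>n\<le>N. (par ^^ n) pstar \<in> P"
    using path_points[OF bt pst] by blast
  define X where "X n = (par ^^ n) pstar" for n
  have "X 0 \<ge> z" "X N < z" using z N unfolding X_def by auto
  then obtain n where n: "n < N" "X n \<ge> z" "X (Suc n) < z" using cross_down by blast
  have onp: "on_path s par pstar (X n)" unfolding on_path_def X_def using N(2) n(1) by (intro exI[of _ n]) auto
  have "X n \<noteq> s" using N(2) n(1) unfolding X_def by auto
  then have "X (Suc n) = pred_pt P s (X n)" using path onp unfolding X_def by simp
  also have "\<dots> = left_nb P (X n)" using n z unfolding pred_pt_def by auto
  finally have eq: "X (Suc n) = Max {y\<in>P. y < X n}" unfolding left_nb_def .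
  have Xn: "X n = z"
  proof (rule ccontr)
    assume "X n \<noteq> z"
    then have "z \<in> {y\<in>P. y < X n}" using n z by auto
    then have "z \<le> Max {y\<in>P. y < X n}" using fin by simp
    then show False using eq n by simp
  qed
  show ?thesis
  proof (cases n)
    case 0 then show ?thesis using Xn unfolding X_def by simp
  next
    case (Suc n')
    have "X n' \<in> P" "X n' \<noteq> s" using N n Suc unfolding X_def by auto
    moreover have "par (X n') = z" using Xn Suc unfolding X_def by simp
    ultimately show ?thesis by blast
  qed
qed

lemma descent_left:
  assumes bt: "is_btree P s \<rho> par"
    and path: "\<forall>q. on_path s par pstar q \<and> q \<noteq> s \<longrightarrow> par q = pred_pt P s q"
    and fin: "finite P" and pst: "pstar \<in> P" and z: "z \<in> P" "z < s" "pstar \<le> z"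
  shows "z = pstar \<or> (\<exists>c\<in>P - {s}. par c = z)"
proof -
  have "pstar \<noteq> s" using z by auto
  then obtain N where N: "(par ^^ N) pstar = s" "\<forall>n<N. (par ^^ n) pstar \<noteq> s"
    "\<forall>n\<le>N. (par ^^ n) pstar \<in> P"
    using path_points[OF bt pst] by blast
  define X where "X n = (par ^^ n) pstar" for n
  have "X 0 \<le> z" "X N > z" using z N unfolding X_def by auto
  then obtain n where n: "n < N" "X n \<le> z" "X (Suc n) > z" using cross_up by blast
  have onp: "on_path s par pstar (X n)" unfolding on_path_def X_def using N(2) n(1) by (intro exI[of _ n]) auto
  have "X n \<noteq> s" using N(2) n(1) unfolding X_def by auto
  then have "X (Suc n) = pred_pt P s (X n)" using path onp unfolding X_def by simp
  also have "\<dots> = right_nb P (X n)" using n z unfolding pred_pt_def by auto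
  finally have eq: "X (Suc n) = Min {y\<in>P. y > X n}" unfolding right_nb_def .
  have Xn: "X n = z"
  proof (rule ccontr)
    assume "X n \<noteq> z"
    then have "z \<in> {y\<in>P. y > X n}" using n z by auto
    then have "z \<ge> Min {y\<in>P. y > X n}" using fin by simp
    then show False using eq n by simp
  qed
  show ?thesis
  proof (cases n)
    case 0 then show ?thesis using Xn unfolding X_def by simp
  next
    case (Suc n')
    have "X n' \<in> P" "X n' \<noteq> s" using N n Suc unfolding X_def by auto
    moreover have "par (X n') = z" using Xn Suc unfolding X_def by simp
    ultimately show ?thesis by blast
  qed
qed

lemma left_of_right:
  assumes "finite P" "z \<in> P" "has_right P z"
  shows "right_nb P z \<in> P" "right_nb P z > z" "left_nb P (right_nb P z) = z"
    "\<forall>y\<in>P. y > z \<longrightarrow> right_nb P z \<le> y"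
proof -
  have ne: "{y\<in>P. y > z} \<noteq> {}" "finite {y\<in>P. y > z}" using assms unfolding has_right_def by auto
  have "Min {y\<in>P. y > z} \<in> {y\<in>P. y > z}" using Min_in[OF ne(2,1)] .
  then show w: "right_nb P z \<in> P" "right_nb P z > z" unfolding right_nb_def by auto
  show mn: "\<forall>y\<in>P. y > z \<longrightarrow> right_nb P z \<le> y" unfolding right_nb_def using ne by simp
  show "left_nb P (right_nb P z) = z" unfolding left_nb_def
    apply (rule Max_eqI) using assms w mn by force+
qed

lemma right_of_left:
  assumes "finite P" "z \<in> P" "has_left P z"
  shows "left_nb P z \<in> P" "left_nb P z < z" "right_nb P (left_nb P z) = z"
    "\<forall>y\<in>P. y < z \<longrightarrow> y \<le> left_nb P z"
proof -
  have ne: "{y\<in>P. y < z} \<noteq> {}" "finite {y\<in>P. y < z}" using assms unfolding has_left_def by auto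
  have "Max {y\<in>P. y < z} \<in> {y\<in>P. y < z}" using Max_in[OF ne(2,1)] .
  then show w: "left_nb P z \<in> P" "left_nb P z < z" unfolding left_nb_def by auto
  show mn: "\<forall>y\<in>P. y < z \<longrightarrow> y \<le> left_nb P z" unfolding left_nb_def using ne by simp
  show "right_nb P (left_nb P z) = z" unfolding right_nb_def
    apply (rule Min_eqI) using assms w mn by force+
qed


lemma arith_bound:
  fixes f :: "real \<Rightarrow> real"
  assumes fin: "finite Z" and sub: "Zk \<subseteq> Z" and cd: "card Zk = min k (card Z)"
    and top: "\<forall>z\<in>Zk. \<forall>z'\<in>Z - Zk. f z' \<le> f z"
    and nn: "\<forall>z\<in>Z. f z \<ge> 0" and tot: "(\<Sum>z\<in>Z. f z) \<le> 2 * R" and R: "R \<ge> 0"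
    and k: "k \<ge> 1" and al: "\<alpha> > 1"
  shows "(\<Sum>z\<in>Z - Zk. f z powr \<alpha>) \<le> 2 powr \<alpha> / real k powr (\<alpha> - 1) * R powr \<alpha>"
proof (cases "card Z \<le> k")
  case True
  then have "Zk = Z" using card_subset_eq[OF fin sub] cd by simp
  then show ?thesis by simp
next
  case False
  have finK: "finite Zk" using fin sub finite_subset by blast
  have ck: "card Zk = k" using cd False by simp
  then have neK: "Zk \<noteq> {}" using k by auto
  define t where "t = Min (f ` Zk)"
  have tle: "\<forall>d\<in>Z - Zk. f d \<le> t"
    unfolding t_def using finK neK top by (simp add: Min_ge_iff)
  have tge: "\<forall>z\<in>Zk. t \<le> f z" unfolding t_def using finK by simp
  have t0: "t \<ge> 0" using Min_in[of "f ` Zk"] finK neK nn sub unfolding t_def by auto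
  have "real (card Zk) * t \<le> (\<Sum>z\<in>Zk. f z)" using sum_bounded_below[of Zk t f] tge by simp
  then have kt: "real k * t \<le> (\<Sum>z\<in>Zk. f z)" using ck by simp
  have spl: "(\<Sum>z\<in>Z. f z) = (\<Sum>z\<in>Z - Zk. f z) + (\<Sum>z\<in>Zk. f z)"
    using sum.subset_diff[OF sub fin] .
  have D0: "(\<Sum>z\<in>Z - Zk. f z) \<ge> 0" using nn by (meson DiffD1 sum_nonneg)
  have K0: "(\<Sum>z\<in>Zk. f z) \<ge> 0" using nn sub by (meson subsetD sum_nonneg)
  have Dle: "(\<Sum>z\<in>Z - Zk. f z) \<le> 2 * R" using spl tot K0 by linarith
  have "real k * t \<le> 2 * R" using spl tot D0 kt by linarith
  then have tk: "t \<le> 2 * R / real k" using k by (simp add: field_simps)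
  have trm: "f d powr \<alpha> \<le> t powr (\<alpha> - 1) * f d" if d: "d \<in> Z - Zk" for d
  proof -
    have fd: "f d \<ge> 0" "f d \<le> t" using nn tle d by auto
    show ?thesis
    proof (cases "f d = 0")
      case True then show ?thesis using al by simp
    next
      case False
      have "f d powr \<alpha> = f d powr ((\<alpha> - 1) + 1)" by simp
      also have "\<dots> = f d powr (\<alpha> - 1) * f d powr 1"
        by (rule powr_add)
      finally have "f d powr \<alpha> = f d powr (\<alpha> - 1) * f d powr 1" .
      also have "\<dots> = f d powr (\<alpha> - 1) * f d" using fd by simp
      also have "\<dots> \<le> t powr (\<alpha> - 1) * f d"
        apply (rule mult_right_mono) using fd al by (auto intro: powr_mono2)
      finally show ?thesis .
    qed
  qed
  have "(\<Sum>z\<in>Z - Zk. f z powr \<alpha>) \<le> (\<Sum>z\<in>Z - Zk. t powr (\<alpha> - 1) * f z)"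
    by (rule sum_mono) (use trm in auto)
  also have "\<dots> = t powr (\<alpha> - 1) * (\<Sum>z\<in>Z - Zk. f z)" by (simp add: sum_distrib_left)
  also have "\<dots> \<le> (2 * R / real k) powr (\<alpha> - 1) * (2 * R)"
    apply (rule mult_mono) using tk t0 al D0 Dle by (auto intro: powr_mono2)
  also have "\<dots> = 2 powr \<alpha> / real k powr (\<alpha> - 1) * R powr \<alpha>"
  proof (cases "R = 0")
    case True then show ?thesis using al by simp
  next
    case False
    then have Rp: "R > 0" using R by simp
    have "(2 * R / real k) powr (\<alpha> - 1) * (2 * R) = (2 * R) powr (\<alpha> - 1) * (2 * R) powr 1 / real k powr (\<alpha> - 1)"
      using Rp by (simp add: powr_divide)
    also have "\<dots> = (2 * R) powr \<alpha> / real k powr (\<alpha> - 1)"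
      using powr_add[of "2*R" "\<alpha> - 1" 1] by simp
    also have "\<dots> = 2 powr \<alpha> / real k powr (\<alpha> - 1) * R powr \<alpha>"
      using Rp by (simp add: powr_mult)
    finally show ?thesis .
  qed
  finally show ?thesis .
qed


lemma zero_sum_bound:
  assumes fin: "finite P" and sP: "s \<in> P" and two: "\<not> one_sided P s"
    and opt: "is_rho_opt \<alpha> P s \<rho>"
  shows "\<exists>R\<ge>0. (\<Sum>z\<in>zero_range_pts P s \<rho>. rho_st P s z) \<le> 2 * R \<and> R powr \<alpha> \<le> cost \<alpha> P \<rho>"
proof -
  have nn: "\<forall>p\<in>P. \<rho> p \<ge> 0" using opt two unfolding is_rho_opt_def by simp
  obtain par pstar where st: "structured_tree P s \<rho> par pstar"
    using opt two unfolding is_rho_opt_def by auto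
  have bt: "is_btree P s \<rho> par" using st unfolding structured_tree_def by blast
  have rc: "{p. root_crossing P s par p} = {pstar}" using st unfolding structured_tree_def by blast
  have path: "\<forall>q. on_path s par pstar q \<and> q \<noteq> s \<longrightarrow> par q = pred_pt P s q"
    using st unfolding structured_tree_def by blast
  have rgt: "\<forall>q\<in>P. q > s \<and> q > Max (in_reach P \<rho> pstar) \<longrightarrow> par q = pred_pt P s q"
    using st unfolding structured_tree_def by blast
  have lft: "\<forall>q\<in>P. q < s \<and> q < Min (in_reach P \<rho> pstar) \<longrightarrow> par q = pred_pt P s q"
    using st unfolding structured_tree_def by blast
  have "pstar \<in> {p. root_crossing P s par p}" using rc by simp
  then have rcp: "root_crossing P s par pstar" by simp
  then have pst: "pstar \<in> P" unfolding root_crossing_def by simp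
  have pchild: "\<exists>c\<in>P - {s}. par c = pstar"
    using rcp unfolding root_crossing_def is_child_def by (auto split: if_splits)
  define R where "R = \<rho> pstar"
  define Re where "Re = in_reach P \<rho> pstar"
  define M where "M = Max Re"
  define m where "m = Min Re"
  have finRe: "finite Re" unfolding Re_def in_reach_def using fin by simp
  have pRe: "pstar \<in> Re" unfolding Re_def in_reach_def using pst nn by simp
  have R0: "R \<ge> 0" unfolding R_def using nn pst by simp
  have MRe: "M \<in> Re" "m \<in> Re" unfolding M_def m_def using finRe pRe Max_in Min_in by blast+
  have mM: "m \<le> pstar" "pstar \<le> M" unfolding M_def m_def using finRe pRe by auto
  have MmR: "M - m \<le> 2 * R" using MRe unfolding Re_def in_reach_def R_def by auto
  have noch: "\<not> (\<exists>c\<in>P - {s}. par c = z)" if "\<rho> z = 0" for z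
  proof
    assume "\<exists>c\<in>P - {s}. par c = z"
    then obtain c where c: "c \<in> P - {s}" "par c = z" by blast
    then have "\<bar>c - par c\<bar> \<le> \<rho> (par c)" "par c \<noteq> c" using bt unfolding is_btree_def by auto
    then show False using c that by simp
  qed
  obtain p where p: "p \<in> P" "p < s" using two unfolding one_sided_def by force
  then obtain n where "(par ^^ n) p = s" using bt unfolding is_btree_def by force
  then have "\<exists>c\<in>P - {s}. par c = s" using reach_parent[OF bt, of p n] p by simp
  then have sZ: "\<rho> s \<noteq> 0" using noch by blast
  define Z where "Z = zero_range_pts P s \<rho>"
  have Zfacts: "z \<in> P" "z \<noteq> s" "has_succ P s z" "\<rho> z = 0" if "z \<in> Z" for z
    using that sZ unfolding Z_def zero_range_pts_def extreme_def by auto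
  define a where "a z = min z (succ_pt P s z)" for z
  define b where "b z = max z (succ_pt P s z)" for z
  have Rside: "a z = z \<and> b z = right_nb P z \<and> right_nb P z \<in> P \<and> z < right_nb P z
      \<and> (\<forall>y\<in>P. y > z \<longrightarrow> right_nb P z \<le> y) \<and> m \<le> z \<and> right_nb P z \<le> M
      \<and> rho_st P s z = b z - a z"
    if z: "z \<in> Z" "z > s" for z
  proof -
    have hr: "has_right P z" using Zfacts[OF z(1)] z(2) unfolding has_succ_def by simp
    note w = left_of_right[OF fin Zfacts(1)[OF z(1)] hr]
    have ab: "a z = z" "b z = right_nb P z" unfolding a_def b_def succ_pt_def using z(2) w(2) by auto
    have "m \<le> z"
    proof (rule ccontr)
      assume "\<not> m \<le> z"
      then have "z \<le> pstar" using mM by simp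
      then have "z = pstar \<or> (\<exists>c\<in>P - {s}. par c = z)"
        using descent_right[OF bt path fin pst Zfacts(1)[OF z(1)] z(2)] by simp
      then show False using pchild noch[OF Zfacts(4)[OF z(1)]] by blast
    qed
    moreover have "right_nb P z \<le> M"
    proof (rule ccontr)
      assume "\<not> right_nb P z \<le> M"
      then have "par (right_nb P z) = pred_pt P s (right_nb P z)"
        using rgt w z(2) unfolding M_def Re_def by auto
      also have "\<dots> = z" unfolding pred_pt_def using w z(2) by auto
      finally have "\<exists>c\<in>P - {s}. par c = z" using w z(2) by (intro bexI[of _ "right_nb P z"]) auto
      then show False using noch[OF Zfacts(4)[OF z(1)]] by blast
    qed
    moreover have "rho_st P s z = b z - a z"
      unfolding rho_st_def using Zfacts[OF z(1)] ab w z(2) unfolding succ_pt_def by auto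
    ultimately show ?thesis using ab w by auto
  qed
  have Lside: "a z = left_nb P z \<and> b z = z \<and> left_nb P z \<in> P \<and> left_nb P z < z
      \<and> (\<forall>y\<in>P. y < z \<longrightarrow> y \<le> left_nb P z) \<and> z \<le> M \<and> m \<le> left_nb P z
      \<and> rho_st P s z = b z - a z"
    if z: "z \<in> Z" "z < s" for z
  proof -
    have hr: "has_left P z" using Zfacts[OF z(1)] z(2) unfolding has_succ_def by simp
    note w = right_of_left[OF fin Zfacts(1)[OF z(1)] hr]
    have ab: "b z = z" "a z = left_nb P z" unfolding a_def b_def succ_pt_def using z(2) w(2) by auto
    have "z \<le> M"
    proof (rule ccontr)
      assume "\<not> z \<le> M"
      then have "pstar \<le> z" using mM by simp
      then have "z = pstar \<or> (\<exists>c\<in>P - {s}. par c = z)"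
        using descent_left[OF bt path fin pst Zfacts(1)[OF z(1)] z(2)] by simp
      then show False using pchild noch[OF Zfacts(4)[OF z(1)]] by blast
    qed
    moreover have "m \<le> left_nb P z"
    proof (rule ccontr)
      assume "\<not> m \<le> left_nb P z"
      then have "par (left_nb P z) = pred_pt P s (left_nb P z)"
        using lft w z(2) unfolding m_def Re_def by auto
      also have "\<dots> = z" unfolding pred_pt_def using w z(2) by auto
      finally have "\<exists>c\<in>P - {s}. par c = z" using w z(2) by (intro bexI[of _ "left_nb P z"]) auto
      then show False using noch[OF Zfacts(4)[OF z(1)]] by blast
    qed
    moreover have "rho_st P s z = b z - a z"
      unfolding rho_st_def using Zfacts[OF z(1)] ab w z(2) unfolding succ_pt_def by auto
    ultimately show ?thesis using ab w by auto
  qed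
  have side: "z > s \<or> z < s" if "z \<in> Z" for z using Zfacts(2)[OF that] by linarith
  have finZ: "finite Z" unfolding Z_def zero_range_pts_def using fin by simp
  have I1: "\<forall>i\<in>Z. m \<le> a i \<and> a i < b i \<and> b i \<le> M"
  proof
    fix i assume i: "i \<in> Z"
    show "m \<le> a i \<and> a i < b i \<and> b i \<le> M"
      using side[OF i] Rside[OF i] Lside[OF i] by auto
  qed
  have I2: "\<forall>i\<in>Z. \<forall>j\<in>Z. i \<noteq> j \<longrightarrow> b i \<le> a j \<or> b j \<le> a i"
  proof (intro ballI impI)
    fix i j assume ij: "i \<in> Z" "j \<in> Z" "i \<noteq> j"
    have iP: "i \<in> P" "j \<in> P" using Zfacts ij by auto
    show "b i \<le> a j \<or> b j \<le> a i"
    proof (cases "i > s")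
      case True
      note ri = Rside[OF ij(1) True]
      show ?thesis
      proof (cases "j > s")
        case True
        note rj = Rside[OF ij(2) True]
        show ?thesis using ri rj iP ij(3) by (cases "i < j") force+
      next
        case False
        then have "j < s" using side[OF ij(2)] by simp
        note lj = Lside[OF ij(2) this]
        show ?thesis using ri lj \<open>j < s\<close> \<open>i > s\<close> by auto
      qed
    next
      case False
      then have iS: "i < s" using side[OF ij(1)] by simp
      note li = Lside[OF ij(1) iS]
      show ?thesis
      proof (cases "j > s")
        case True
        note rj = Rside[OF ij(2) True]
        show ?thesis using li rj iS True by auto
      next
        case False
        then have "j < s" using side[OF ij(2)] by simp
        note lj = Lside[OF ij(2) this]
        show ?thesis using li lj iP ij(3) by (cases "i < j") force+
      qed
    qed
  qed
  have "(\<Sum>i\<in>Z. b i - a i) \<le> M - m"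
    by (rule intervals_sum[OF finZ _ I1 I2]) (use mM in simp)
  moreover have "(\<Sum>z\<in>Z. rho_st P s z) = (\<Sum>i\<in>Z. b i - a i)"
  proof (rule sum.cong)
    fix z assume z: "z \<in> Z"
    show "rho_st P s z = b z - a z" using side[OF z] Rside[OF z] Lside[OF z] by auto
  qed simp
  moreover have "R powr \<alpha> \<le> cost \<alpha> P \<rho>"
    unfolding cost_def R_def using fin pst by (intro member_le_sum) auto
  ultimately show ?thesis using MmR R0 unfolding Z_def by (intro exI[of _ R]) auto
qed


lemma rho_st_nonneg:
  assumes fin: "finite P"
  shows "rho_st P s z \<ge> 0"
proof -
  have "right_nb P s - s \<ge> 0" if h: "has_right P s"
  proof -
    have "{y\<in>P. y > s} \<noteq> {}" "finite {y\<in>P. y > s}" using h fin unfolding has_right_def by auto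
    then have "Min {y\<in>P. y > s} \<in> {y\<in>P. y > s}" by (rule Min_in[rotated])
    then show ?thesis unfolding right_nb_def by simp
  qed
  moreover have "s - left_nb P s \<ge> 0" if h: "has_left P s"
  proof -
    have "{y\<in>P. y < s} \<noteq> {}" "finite {y\<in>P. y < s}" using h fin unfolding has_left_def by auto
    then have "Max {y\<in>P. y < s} \<in> {y\<in>P. y < s}" by (rule Max_in[rotated])
    then show ?thesis unfolding left_nb_def by simp
  qed
  ultimately show ?thesis unfolding rho_st_def by (auto simp: le_max_iff_disj)
qed

theorem lemma2:
  fixes P :: "real set" and s :: real and k :: nat and \<alpha> :: real
    and \<rho>opt :: "real \<Rightarrow> real" and Zk :: "real set"
  assumes "finite P" and "s \<in> P" and "k \<ge> 1" and "\<alpha> > 1"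
    and "is_rho_opt \<alpha> P s \<rho>opt"
    and "is_Zk k P s \<rho>opt Zk"
  shows "cost \<alpha> P (rho_k P s \<rho>opt Zk)
           \<le> (1 + 2 powr \<alpha> / real k powr (\<alpha> - 1)) * cost \<alpha> P \<rho>opt"
proof -
  have c0: "cost \<alpha> P \<rho>opt \<ge> 0" unfolding cost_def by (simp add: sum_nonneg)
  have cc: "2 powr \<alpha> / real k powr (\<alpha> - 1) \<ge> 0" by simp
  show ?thesis
  proof (cases "one_sided P s")
    case True
    then have "rho_k P s \<rho>opt Zk = \<rho>opt" unfolding rho_k_def by auto
    then show ?thesis using c0 cc by (simp add: algebra_simps)
  next
    case two: False
    define Z where "Z = zero_range_pts P s \<rho>opt"
    have Zk: "Zk \<subseteq> Z" "card Zk = min k (card Z)"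
      "\<forall>z\<in>Zk. \<forall>z'\<in>Z - Zk. rho_st P s z' \<le> rho_st P s z"
      using assms(6) unfolding is_Zk_def Z_def Let_def by auto
    have ZP: "Z \<subseteq> P" unfolding Z_def zero_range_pts_def by auto
    have finZ: "finite Z" using ZP assms(1) finite_subset by blast
    obtain R where R: "R \<ge> 0" "(\<Sum>z\<in>Z. rho_st P s z) \<le> 2 * R" "R powr \<alpha> \<le> cost \<alpha> P \<rho>opt"
      using zero_sum_bound[OF assms(1,2) two assms(5)] unfolding Z_def by blast
    have D: "(\<Sum>z\<in>Z - Zk. rho_st P s z powr \<alpha>) \<le> 2 powr \<alpha> / real k powr (\<alpha> - 1) * R powr \<alpha>"
      using arith_bound[OF finZ Zk(1,2,3) _ R(2) R(1) assms(3,4)] rho_st_nonneg[OF assms(1)] by blast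
    have pt: "rho_k P s \<rho>opt Zk p powr \<alpha>
        = \<rho>opt p powr \<alpha> + (if p \<in> Z - Zk then rho_st P s p powr \<alpha> else 0)" if "p \<in> P" for p
    proof -
      have "p \<in> Z \<Longrightarrow> \<rho>opt p = 0" unfolding Z_def zero_range_pts_def by auto
      then show ?thesis unfolding rho_k_def using two Zk(1) assms(4) unfolding Z_def
        by auto
    qed
    have "cost \<alpha> P (rho_k P s \<rho>opt Zk)
        = cost \<alpha> P \<rho>opt + (\<Sum>p\<in>P. if p \<in> Z - Zk then rho_st P s p powr \<alpha> else 0)"
      unfolding cost_def using pt by (simp add: sum.distrib)
    also have "(\<Sum>p\<in>P. if p \<in> Z - Zk then rho_st P s p powr \<alpha> else 0)
        = (\<Sum>z\<in>Z - Zk. rho_st P s z powr \<alpha>)"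
    proof -
      have "P \<inter> (Z - Zk) = Z - Zk" using ZP by auto
      then show ?thesis
        using sum.inter_restrict[OF assms(1), of "\<lambda>p. rho_st P s p powr \<alpha>" "Z - Zk"] by simp
    qed
    also have "cost \<alpha> P \<rho>opt + \<dots> \<le> cost \<alpha> P \<rho>opt + 2 powr \<alpha> / real k powr (\<alpha> - 1) * cost \<alpha> P \<rho>opt"
      using D R(3) cc mult_left_mono[OF R(3) cc] by linarith
    finally show ?thesis by (simp add: algebra_simps)
  qed
qed

end
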